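(* Let $W\in L^\infty$ and $(X_t)_{t\in\mathbb{T}}\in\mathcal{A}(W)$. Then $(X_t)$ is Pareto optimal if and only if there exists $\lambda\in(0,\infty)^T$ such that $(X_t)$ solves Problem $\mathrm{P}_\lambda$.
   Context: Let $T\ge 1$ be an integer and $\mathbb{T}=\{1,\dots,T\}$. Let $(\Omega,\mathcal{F},(\mathcal{F}_t)_{t\in\{0,1,\dots,T\}},P)$ be a filtered probability space and $L^{\infty}=L^{\infty}(\Omega,\mathcal{F}_T,P)$. Let $(r_t)_{t\in\mathbb{T}}$ be a bounded, nonnegative, predictable process ($r_t$ is $\mathcal{F}_{t-1}$-measurable), $B_0=1$, $B_t=\prod_{k=1}^t(1+r_k)$, and for a process $(X_t)$ write $\tilde X_t=X_t/B_t$. For $W\in L^\infty$, $\mathcal{A}(W)$ is the set of $(\mathcal{F}_t)$-adapted processes $(Y_t)_{t\in\mathbb{T}}$ with $Y_t\in L^\infty$ for all $t$ and $\sum_{t\in\mathbb{T}}\tilde Y_t=W$ a.s. For each $t\in\mathbb{T}$, $u_t:\mathbb{R}\to\mathbb{R}$ is strictly concave, $C^1$, with $u_t'(x)>0$ for all $x$. For $\lambda\in\mathbb{R}_+^T\setminus\{0\}$, Problem $\mathrm{P}_\lambda$ is: maximize $\sum_{t\in\mathbb{T}}\lambda_tE[u_t(\tilde Y_t)]$ over $(Y_t)\in\mathcal{A}(W)$. An allocation $(X_t)\in\mathcal{A}(W)$ is Pareto optimal if there is no $(Y_t)\in\mathcal{A}(W)$ with $E[u_t(\tilde Y_t)]\ge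 E[u_t(\tilde X_t)]$ for all $t\in\mathbb{T}$ and $E[u_{t_0}(\tilde Y_{t_0})]>E[u_{t_0}(\tilde X_{t_0})]$ for at least one $t_0\in\mathbb{T}$. *)

theory Defs
  imports "HOL-Probability.Probability"
begin

definition finite_filtration :: "'a measure \<Rightarrow> (nat \<Rightarrow> 'a measure) \<Rightarrow> nat \<Rightarrow> bool" where
  "finite_filtration M F T \<longleftrightarrow>
     (\<forall>t\<le>T. subalgebra M (F t)) \<and> (\<forall>s t. s \<le> t \<longrightarrow> t \<le> T \<longrightarrow> sets (F s) \<subseteq> sets (F t))"

definition Linfty :: "'a measure \<Rightarrow> 'a measure \<Rightarrow> ('a \<Rightarrow> real) \<Rightarrow> bool" where
  "Linfty M G X \<longleftrightarrow> X \<in> borel_measurable G \<and> (\<exists>C. AE x in M. \<bar>X x\<bar> \<le> C)"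

definition rate_process :: "'a measure \<Rightarrow> (nat \<Rightarrow> 'a measure) \<Rightarrow> nat \<Rightarrow> (nat \<Rightarrow> 'a \<Rightarrow> real) \<Rightarrow> bool" where
  "rate_process M F T r \<longleftrightarrow>
     (\<forall>t\<in>{1..T}. r t \<in> borel_measurable (F (t - 1))) \<and>
     (\<exists>C. \<forall>t\<in>{1..T}. \<forall>x\<in>space M. 0 \<le> r t x \<and> r t x \<le> C)"

definition bank :: "(nat \<Rightarrow> 'a \<Rightarrow> real) \<Rightarrow> nat \<Rightarrow> 'a \<Rightarrow> real" where
  "bank r t x = (\<Prod>k\<in>{1..t}. 1 + r k x)"

definition disc :: "(nat \<Rightarrow> 'a \<Rightarrow> real) \<Rightarrow> (nat \<Rightarrow> 'a \<Rightarrow> real) \<Rightarrow> nat \<Rightarrow> 'a \<Rightarrow> real" where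
  "disc r Y t x = Y t x / bank r t x"

definition admissible ::
  "'a measure \<Rightarrow> (nat \<Rightarrow> 'a measure) \<Rightarrow> nat \<Rightarrow> (nat \<Rightarrow> 'a \<Rightarrow> real) \<Rightarrow> ('a \<Rightarrow> real)
    \<Rightarrow> (nat \<Rightarrow> 'a \<Rightarrow> real) \<Rightarrow> bool" where
  "admissible M F T r W Y \<longleftrightarrow>
     (\<forall>t\<in>{1..T}. Y t \<in> borel_measurable (F t) \<and> Linfty M (F T) (Y t)) \<and>
     (AE x in M. (\<Sum>t\<in>{1..T}. disc r Y t x) = W x)"

definition strictly_concave :: "(real \<Rightarrow> real) \<Rightarrow> bool" where
  "strictly_concave f \<longleftrightarrow>
     (\<forall>x y a. x \<noteq> y \<longrightarrow> 0 < a \<longrightarrow> a < 1 \<longrightarrow> a * f x + (1 - a) * f y < f (a * x + (1 - a) * y))"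

definition utility :: "(real \<Rightarrow> real) \<Rightarrow> bool" where
  "utility f \<longleftrightarrow> strictly_concave f \<and>
     (\<exists>f'. (\<forall>x. (f has_real_derivative f' x) (at x)) \<and> continuous_on UNIV f' \<and> (\<forall>x. 0 < f' x))"

definition exp_util :: "'a measure \<Rightarrow> (nat \<Rightarrow> 'a \<Rightarrow> real) \<Rightarrow> (nat \<Rightarrow> real \<Rightarrow> real)
    \<Rightarrow> (nat \<Rightarrow> 'a \<Rightarrow> real) \<Rightarrow> nat \<Rightarrow> real" where
  "exp_util M r u Y t = (\<integral>x. u t (disc r Y t x) \<partial>M)"

definition solves_P ::
  "'a measure \<Rightarrow> (nat \<Rightarrow> 'a measure) \<Rightarrow> nat \<Rightarrow> (nat \<Rightarrow> 'a \<Rightarrow> real) \<Rightarrow> (nat \<Rightarrow> real \<Rightarrow> real)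
    \<Rightarrow> ('a \<Rightarrow> real) \<Rightarrow> (nat \<Rightarrow> real) \<Rightarrow> (nat \<Rightarrow> 'a \<Rightarrow> real) \<Rightarrow> bool" where
  "solves_P M F T r u W lam X \<longleftrightarrow>
     admissible M F T r W X \<and>
     (\<forall>Y. admissible M F T r W Y \<longrightarrow>
        (\<Sum>t\<in>{1..T}. lam t * exp_util M r u Y t) \<le> (\<Sum>t\<in>{1..T}. lam t * exp_util M r u X t))"

definition pareto_optimal ::
  "'a measure \<Rightarrow> (nat \<Rightarrow> 'a measure) \<Rightarrow> nat \<Rightarrow> (nat \<Rightarrow> 'a \<Rightarrow> real) \<Rightarrow> (nat \<Rightarrow> real \<Rightarrow> real)
    \<Rightarrow> ('a \<Rightarrow> real) \<Rightarrow> (nat \<Rightarrow> 'a \<Rightarrow> real) \<Rightarrow> bool" where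
  "pareto_optimal M F T r u W X \<longleftrightarrow>
     admissible M F T r W X \<and>
     \<not> (\<exists>Y. admissible M F T r W Y \<and>
           (\<forall>t\<in>{1..T}. exp_util M r u X t \<le> exp_util M r u Y t) \<and>
           (\<exists>t0\<in>{1..T}. exp_util M r u X t0 < exp_util M r u Y t0))"

end

theory Submission
  imports Defs
begin


lemma utility_deriv:
  assumes "utility f"
  obtains f' where "\<And>x. (f has_real_derivative f' x) (at x)" "continuous_on UNIV f'" "\<And>x. 0 < f' x"
  using assms unfolding utility_def by blast

lemma sc_concave: assumes "strictly_concave f" shows "concave_on UNIV f"
  unfolding concave_on_iff
proof (intro conjI ballI allI impI)
  fix x y :: real and a b :: real
  assume h: "0 \<le> a" "0 \<le> b" "a + b = 1"
  show "a * f x + b * f y \<le> f (a *\<^sub>R x + b *\<^sub>R y)"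
  proof (cases "x = y \<or> a = 0 \<or> b = 0")
    case True
    then show ?thesis using h
      by (auto simp: algebra_simps simp flip: distrib_left distrib_right)
  next
    case False
    then have "a * f x + (1 - a) * f y < f (a * x + (1 - a) * y)"
      using assms h unfolding strictly_concave_def by auto
    moreover have "b = 1 - a" using h by simp
    ultimately show ?thesis by simp
  qed
qed simp

lemma utility_tangent:
  assumes "strictly_concave f" "\<And>x. (f has_real_derivative f' x) (at x)"
  shows "f y \<le> f x + f' x * (y - x)"
proof -
  have c: "convex_on UNIV (\<lambda>x. - f x)" using sc_concave[OF assms(1)] by (simp add: concave_on_def)
  have d: "((\<lambda>x. - f x) has_field_derivative - f' x) (at x within UNIV)"
    using assms(2) by (auto intro: derivative_eq_intros)
  have "(\<lambda>x. - f x) y - (\<lambda>x. - f x) x \<ge> - f' x * (y - x)"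
    by (rule convex_on_imp_above_tangent[OF c _ _ _ d]) auto
  then show ?thesis by simp
qed

lemma utility_tangent':
  assumes "utility f" "\<And>x. (f has_real_derivative f' x) (at x)"
  shows "f y \<le> f x + f' x * (y - x)"
  using utility_tangent assms unfolding utility_def by blast

lemma utility_mono:
  assumes "utility f" "x \<le> y" shows "f x \<le> f y"
proof -
  obtain f' where d: "\<And>x. (f has_real_derivative f' x) (at x)" and p: "\<And>x. 0 < f' x"
    using utility_deriv[OF assms(1)] by metis
  have "f x \<le> f y + f' y * (x - y)" by (rule utility_tangent'[OF assms(1) d])
  moreover have "f' y * (x - y) \<le> 0" using p[of y] assms(2) by (simp add: mult_nonneg_nonpos)
  ultimately show ?thesis by linarith
qed

lemma cont_bounded_on:
  fixes g :: "real \<Rightarrow> real"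
  assumes "continuous_on UNIV g"
  shows "\<exists>B. \<forall>z\<in>{-K..K}. \<bar>g z\<bar> \<le> B"
proof -
  have "compact (g ` {-K..K})"
    by (rule compact_continuous_image) (use assms continuous_on_subset in auto)
  then have "bounded (g ` {-K..K})" by (rule compact_imp_bounded)
  then show ?thesis unfolding bounded_iff by auto
qed



lemma (in prob_space) bdd_integrable:
  fixes g :: "'a \<Rightarrow> real"
  assumes "g \<in> borel_measurable M" "AE x in M. \<bar>g x\<bar> \<le> B"
  shows "integrable M g"
  using integrable_const_bound[of g B] assms by auto

lemma (in prob_space) cont_comp_bdd:
  fixes g :: "real \<Rightarrow> real"
  assumes "continuous_on UNIV g" "Z \<in> borel_measurable M" "AE x in M. \<bar>Z x\<bar> \<le> K"
  shows "(\<lambda>x. g (Z x)) \<in> borel_measurable M" "\<exists>B. AE x in M. \<bar>g (Z x)\<bar> \<le> B"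
    "integrable M (\<lambda>x. g (Z x))"
proof -
  show m: "(\<lambda>x. g (Z x)) \<in> borel_measurable M"
    using measurable_compose[OF assms(2) borel_measurable_continuous_onI[OF assms(1)]] by simp
  obtain B where B: "\<forall>z\<in>{-K..K}. \<bar>g z\<bar> \<le> B" using cont_bounded_on[OF assms(1)] by blast
  have "AE x in M. \<bar>g (Z x)\<bar> \<le> B" using assms(3) by eventually_elim (use B in \<open>auto simp: abs_le_iff\<close>)
  then show "\<exists>B. AE x in M. \<bar>g (Z x)\<bar> \<le> B" by blast
  then show "integrable M (\<lambda>x. g (Z x))" using bdd_integrable m by blast
qed

lemma deriv_cont: assumes "\<And>x. (f has_real_derivative f' x) (at x)" shows "continuous_on UNIV f"
  using assms by (metis DERIV_isCont continuous_at_imp_continuous_on)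

lemma (in prob_space) foc:
  assumes u: "utility f" and d: "\<And>x. (f has_real_derivative f' x) (at x)"
    and c: "continuous_on UNIV f'"
    and Zm: "Z \<in> borel_measurable M" and Zb: "AE x in M. \<bar>Z x\<bar> \<le> K1"
    and Hm: "H \<in> borel_measurable M" and Hb: "AE x in M. \<bar>H x\<bar> \<le> K2"
    and pos: "0 < (\<integral>x. f' (Z x) * H x \<partial>M)"
  shows "\<exists>N. \<forall>n\<ge>N. (\<integral>x. f (Z x) \<partial>M) < (\<integral>x. f (Z x + H x / real (Suc n)) \<partial>M)"
proof -
  define s where "s n x = f' (Z x + H x / real (Suc n)) * H x" for n x
  obtain B where B: "\<forall>z\<in>{-(K1+K2)..K1+K2}. \<bar>f' z\<bar> \<le> B" using cont_bounded_on[OF c] by blast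
  have cf: "continuous_on UNIV f" by (rule deriv_cont[OF d])
  have Zn: "AE x in M. \<bar>Z x + H x / real (Suc n)\<bar> \<le> K1 + K2" for n
    using Zb Hb
  proof eventually_elim
    case (elim x)
    have "\<bar>H x\<bar> * 1 \<le> \<bar>H x\<bar> * real (Suc n)" by (intro mult_left_mono) auto
    then have "\<bar>H x / real (Suc n)\<bar> \<le> \<bar>H x\<bar>" by (simp add: abs_divide pos_divide_le_eq)
    then show ?case using elim by linarith
  qed
  have sm: "s n \<in> borel_measurable M" for n
    unfolding s_def using Zm Hm
    by (intro borel_measurable_times measurable_compose[OF _ borel_measurable_continuous_onI[OF c]]) auto
  have sb: "AE x in M. norm (s n x) \<le> B * K2" for n
    using Zn[of n] Hb
  proof eventually_elim
    case (elim x)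
    have "\<bar>f' (Z x + H x / real (Suc n))\<bar> \<le> B" using B elim(1) by (auto simp: abs_le_iff)
    then show ?case unfolding s_def using elim(2) by (simp add: abs_mult mult_mono)
  qed
  have lim: "AE x in M. (\<lambda>n. s n x) \<longlonglongrightarrow> f' (Z x) * H x"
  proof (rule AE_I2)
    fix x
    have "(\<lambda>n. H x * inverse (real (Suc n))) \<longlonglongrightarrow> H x * 0"
      by (intro tendsto_mult tendsto_const LIMSEQ_inverse_real_of_nat)
    then have "(\<lambda>n. Z x + H x / real (Suc n)) \<longlonglongrightarrow> Z x + 0"
      by (intro tendsto_add tendsto_const) (simp add: divide_inverse)
    then have "(\<lambda>n. f' (Z x + H x / real (Suc n))) \<longlonglongrightarrow> f' (Z x)"
      using continuous_on_tendsto_compose[OF c] by force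
    then show "(\<lambda>n. s n x) \<longlonglongrightarrow> f' (Z x) * H x"
      unfolding s_def by (intro tendsto_mult tendsto_const)
  qed
  have fm: "(\<lambda>x. f' (Z x) * H x) \<in> borel_measurable M"
    using Zm Hm by (intro borel_measurable_times measurable_compose[OF _ borel_measurable_continuous_onI[OF c]]) auto
  have conv: "(\<lambda>n. \<integral>x. s n x \<partial>M) \<longlonglongrightarrow> (\<integral>x. f' (Z x) * H x \<partial>M)"
    by (rule integral_dominated_convergence[OF fm sm _ lim sb]) simp
  have sint: "integrable M (s n)" for n
    by (rule integrable_dominated_convergence2[OF fm sm _ lim sb]) simp
  from order_tendstoD(1)[OF conv pos] obtain N where N: "\<And>n. n \<ge> N \<Longrightarrow> 0 < (\<integral>x. s n x \<partial>M)"
    unfolding eventually_sequentially by blast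
  show ?thesis
  proof (intro exI allI impI)
    fix n assume "N \<le> n"
    then have p: "0 < (\<integral>x. s n x \<partial>M)" by (rule N)
    have i1: "integrable M (\<lambda>x. f (Z x))" using cont_comp_bdd[OF cf Zm Zb] by simp
    have i2: "integrable M (\<lambda>x. f (Z x + H x / real (Suc n)))"
      using cont_comp_bdd(3)[OF cf _ Zn[of n]] Zm Hm by auto
    have "(\<integral>x. s n x / real (Suc n) \<partial>M) \<le> (\<integral>x. f (Z x + H x / real (Suc n)) - f (Z x) \<partial>M)"
    proof (rule integral_mono)
      show "integrable M (\<lambda>x. s n x / real (Suc n))" using sint by auto
      show "integrable M (\<lambda>x. f (Z x + H x / real (Suc n)) - f (Z x))" using i1 i2 by auto
      fix x
      have "f (Z x) \<le> f (Z x + H x / real (Suc n)) + f' (Z x + H x / real (Suc n)) * (Z x - (Z x + H x / real (Suc n)))"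
        by (rule utility_tangent'[OF u d])
      then show "s n x / real (Suc n) \<le> f (Z x + H x / real (Suc n)) - f (Z x)"
        unfolding s_def by (simp add: algebra_simps)
    qed
    also have "\<dots> = (\<integral>x. f (Z x + H x / real (Suc n)) \<partial>M) - (\<integral>x. f (Z x) \<partial>M)"
      using i1 i2 by simp
    finally have "(\<integral>x. s n x \<partial>M) / real (Suc n) \<le> (\<integral>x. f (Z x + H x / real (Suc n)) \<partial>M) - (\<integral>x. f (Z x) \<partial>M)"
      by simp
    moreover have "0 < (\<integral>x. s n x \<partial>M) / real (Suc n)" using p by simp
    ultimately show "(\<integral>x. f (Z x) \<partial>M) < (\<integral>x. f (Z x + H x / real (Suc n)) \<partial>M)" by linarith
  qed
qed



lemma (in prob_space) integral_pos:
  fixes g :: "'a \<Rightarrow> real"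
  assumes "integrable M g" "\<And>x. x \<in> space M \<Longrightarrow> 0 < g x"
  shows "0 < integral\<^sup>L M g"
proof -
  have ge: "0 \<le> integral\<^sup>L M g" using assms by (intro integral_nonneg_AE) (auto intro!: AE_I2 less_imp_le)
  have "integral\<^sup>L M g \<noteq> 0"
  proof
    assume "integral\<^sup>L M g = 0"
    moreover have "AE x in M. 0 \<le> g x" using assms(2) by (auto intro!: AE_I2 less_imp_le)
    ultimately have "AE x in M. g x = 0"
      using integral_nonneg_eq_0_iff_AE[OF assms(1)] by simp
    then have "AE x in M. False" using AE_space by eventually_elim (use assms(2) in force)
    then show False using AE_False by simp
  qed
  then show ?thesis using ge by simp
qed

lemma (in prob_space) integral_aff:
  fixes a H :: "'a \<Rightarrow> real"
  assumes "integrable M a" "integrable M (\<lambda>x. a x * H x)"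
  shows "(\<integral>x. a x * (H x - m) \<partial>M) = (\<integral>x. a x * H x \<partial>M) - m * (\<integral>x. a x \<partial>M)"
proof -
  have "(\<integral>x. a x * (H x - m) \<partial>M) = (\<integral>x. a x * H x - m * a x \<partial>M)"
    by (simp add: algebra_simps)
  also have "\<dots> = (\<integral>x. a x * H x \<partial>M) - (\<integral>x. m * a x \<partial>M)"
    using assms by (intro Bochner_Integration.integral_diff) auto
  finally show ?thesis by simp
qed

lemma (in prob_space) bdd_mult_int:
  fixes g :: "real \<Rightarrow> real"
  assumes "continuous_on UNIV g" "Z \<in> borel_measurable M" "AE x in M. \<bar>Z x\<bar> \<le> K"
    "H \<in> borel_measurable M" "AE x in M. \<bar>H x\<bar> \<le> K2"
  shows "integrable M (\<lambda>x. g (Z x) * H x)"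
proof -
  obtain B where B: "AE x in M. \<bar>g (Z x)\<bar> \<le> B" using cont_comp_bdd(2)[OF assms(1-3)] by blast
  have "AE x in M. \<bar>g (Z x) * H x\<bar> \<le> B * K2" using B assms(5)
    by eventually_elim (simp add: abs_mult mult_mono')
  moreover have "(\<lambda>x. g (Z x) * H x) \<in> borel_measurable M"
    using cont_comp_bdd(1)[OF assms(1-3)] assms(4) by measurable
  ultimately show ?thesis by (intro bdd_integrable)
qed

locale setting = prob_space M for M :: "'a measure" +
  fixes F :: "nat \<Rightarrow> 'a measure" and T :: nat and r :: "nat \<Rightarrow> 'a \<Rightarrow> real"
    and u :: "nat \<Rightarrow> real \<Rightarrow> real"
  assumes T1: "1 \<le> T" and filt: "finite_filtration M F T" and rate: "rate_process M F T r"
    and util: "\<forall>t\<in>{1..T}. utility (u t)"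
begin

lemma subalg: "t \<le> T \<Longrightarrow> subalgebra M (F t)"
  using filt unfolding finite_filtration_def by auto

lemma space_F: "t \<le> T \<Longrightarrow> space (F t) = space M"
  using subalg unfolding subalgebra_def by auto

lemma meas_mono: "s \<le> t \<Longrightarrow> t \<le> T \<Longrightarrow> g \<in> borel_measurable (F s) \<Longrightarrow> g \<in> borel_measurable (F t)"
proof -
  assume a: "s \<le> t" "t \<le> T" "g \<in> borel_measurable (F s)"
  have "subalgebra (F t) (F s)"
    using filt a space_F[of s] space_F[of t] unfolding finite_filtration_def subalgebra_def by auto
  then show ?thesis using measurable_from_subalg a(3) by blast
qed

lemma meas_M: "t \<le> T \<Longrightarrow> g \<in> borel_measurable (F t) \<Longrightarrow> g \<in> borel_measurable M"
  using measurable_from_subalg subalg by blast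

lemma bank_ge1: "t \<le> T \<Longrightarrow> x \<in> space M \<Longrightarrow> 1 \<le> bank r t x"
  unfolding bank_def using rate unfolding rate_process_def by (intro prod_ge_1) auto

lemma bank_le: "\<exists>CB. \<forall>t\<le>T. \<forall>x\<in>space M. bank r t x \<le> CB"
proof -
  obtain C where C: "\<forall>t\<in>{1..T}. \<forall>x\<in>space M. 0 \<le> r t x \<and> r t x \<le> C"
    using rate unfolding rate_process_def by blast
  define m where "m = max C 0"
  have "bank r t x \<le> (1 + m) ^ T" if "t \<le> T" "x \<in> space M" for t x
  proof -
    have "bank r t x \<le> (\<Prod>k\<in>{1..t}. 1 + m)"
      unfolding bank_def using C that unfolding m_def by (intro prod_mono) force
    also have "\<dots> = (1 + m) ^ t" by simp
    also have "\<dots> \<le> (1 + m) ^ T" using that by (intro power_increasing) (auto simp: m_def)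
    finally show ?thesis .
  qed
  then show ?thesis by blast
qed

lemma bank_meas: "t \<le> T \<Longrightarrow> bank r t \<in> borel_measurable (F t)"
proof -
  assume t: "t \<le> T"
  have "r k \<in> borel_measurable (F t)" if "k \<in> {1..t}" for k
    using rate that t meas_mono[of "k - 1" t "r k"] unfolding rate_process_def by auto
  then show ?thesis unfolding bank_def[abs_def] by (intro borel_measurable_prod) auto
qed

lemma disc_meas: "admissible M F T r W Y \<Longrightarrow> t \<in> {1..T} \<Longrightarrow> disc r Y t \<in> borel_measurable (F t)"
  unfolding admissible_def disc_def[abs_def] using bank_meas by (intro borel_measurable_divide) auto

lemma disc_bdd: "admissible M F T r W Y \<Longrightarrow> t \<in> {1..T} \<Longrightarrow> \<exists>K. AE x in M. \<bar>disc r Y t x\<bar> \<le> K"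
proof -
  assume a: "admissible M F T r W Y" "t \<in> {1..T}"
  then obtain C where C: "AE x in M. \<bar>Y t x\<bar> \<le> C" unfolding admissible_def Linfty_def by blast
  have "AE x in M. \<bar>disc r Y t x\<bar> \<le> C" using C AE_space
  proof eventually_elim
    case (elim x)
    have b: "1 \<le> bank r t x" using bank_ge1 a elim by auto
    have "\<bar>Y t x\<bar> / bank r t x \<le> \<bar>Y t x\<bar> / 1" using b by (intro divide_left_mono) auto
    then show ?case using elim b unfolding disc_def by (simp add: abs_divide)
  qed
  then show ?thesis by blast
qed


definition ud :: "nat \<Rightarrow> real \<Rightarrow> real" where
  "ud t = (SOME f'. (\<forall>x. (u t has_real_derivative f' x) (at x)) \<and> continuous_on UNIV f' \<and> (\<forall>x. 0 < f' x))"

lemma ud: assumes "t \<in> {1..T}"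
  shows "\<And>x. (u t has_real_derivative ud t x) (at x)" "continuous_on UNIV (ud t)" "\<And>x. 0 < ud t x"
proof -
  have "\<exists>f'. (\<forall>x. (u t has_real_derivative f' x) (at x)) \<and> continuous_on UNIV f' \<and> (\<forall>x. 0 < f' x)"
    using util assms unfolding utility_def by blast
  from someI_ex[OF this] show "\<And>x. (u t has_real_derivative ud t x) (at x)" "continuous_on UNIV (ud t)" "\<And>x. 0 < ud t x"
    unfolding ud_def by auto
qed

lemma utl: "t \<in> {1..T} \<Longrightarrow> utility (u t)" using util by auto

lemma stepA:
  assumes po: "pareto_optimal M F T r u W X" and t: "t \<in> {1..T}"
    and Hm: "H \<in> borel_measurable (F t)" and Hb: "AE x in M. \<bar>H x\<bar> \<le> K"
    and neg: "(\<integral>x. ud t (disc r X t x) * H x \<partial>M) < 0"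
  shows "(\<integral>x. ud T (disc r X T x) * H x \<partial>M) \<le> 0"
proof (rule ccontr)
  assume "\<not> ?thesis"
  then have posT: "0 < (\<integral>x. ud T (disc r X T x) * H x \<partial>M)" by simp
  have adm: "admissible M F T r W X" using po unfolding pareto_optimal_def by blast
  have tT: "t \<noteq> T" using neg posT by auto
  have Tin: "T \<in> {1..T}" using T1 by auto
  have tle: "t \<le> T" using t by auto
  obtain K1 where K1: "AE x in M. \<bar>disc r X t x\<bar> \<le> K1" using disc_bdd[OF adm t] by blast
  obtain K2 where K2: "AE x in M. \<bar>disc r X T x\<bar> \<le> K2" using disc_bdd[OF adm Tin] by blast
  have Z1: "disc r X t \<in> borel_measurable M" using disc_meas[OF adm t] meas_M tle by blast
  have Z2: "disc r X T \<in> borel_measurable M" using disc_meas[OF adm Tin] meas_M by blast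
  have HM: "H \<in> borel_measurable M" using Hm meas_M tle by blast
  have HmT: "H \<in> borel_measurable (F T)" using Hm meas_mono tle by blast
  have Hb': "AE x in M. \<bar>- H x\<bar> \<le> K" using Hb by simp
  have p1: "0 < (\<integral>x. ud t (disc r X t x) * - H x \<partial>M)" using neg by simp
  obtain N1 where N1: "\<And>n. n \<ge> N1 \<Longrightarrow> (\<integral>x. u t (disc r X t x) \<partial>M) < (\<integral>x. u t (disc r X t x + - H x / real (Suc n)) \<partial>M)"
    using prob_space.foc[OF prob_space_axioms utl[OF t] ud(1)[OF t] ud(2)[OF t] Z1 K1 _ Hb' p1] HM by auto
  obtain N2 where N2: "\<And>n. n \<ge> N2 \<Longrightarrow> (\<integral>x. u T (disc r X T x) \<partial>M) < (\<integral>x. u T (disc r X T x + H x / real (Suc n)) \<partial>M)"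
    using prob_space.foc[OF prob_space_axioms utl[OF Tin] ud(1)[OF Tin] ud(2)[OF Tin] Z2 K2 HM Hb posT] by auto
  define n where "n = max N1 N2"
  define h where "h x = H x / real (Suc n)" for x
  define Y where "Y s x = X s x + (if s = T then bank r s x * h x else 0) - (if s = t then bank r s x * h x else 0)" for s x
  have hle: "\<bar>h x\<bar> \<le> \<bar>H x\<bar>" for x
  proof -
    have "\<bar>H x\<bar> * 1 \<le> \<bar>H x\<bar> * real (Suc n)" by (intro mult_left_mono) auto
    then show ?thesis unfolding h_def by (simp add: abs_divide pos_divide_le_eq)
  qed
  have hm: "h \<in> borel_measurable (F t)" unfolding h_def[abs_def] using Hm by measurable
  have hmT: "h \<in> borel_measurable (F T)" unfolding h_def[abs_def] using HmT by measurable
  have discY: "disc r Y s x = disc r X s x + (if s = T then h x else 0) - (if s = t then h x else 0)"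
    if "x \<in> space M" "s \<in> {1..T}" for s x
  proof -
    have "bank r s x \<noteq> 0" using bank_ge1[of s x] that by auto
    then show ?thesis unfolding disc_def Y_def by (auto simp: field_simps)
  qed
  obtain CB where CB: "\<forall>t\<le>T. \<forall>x\<in>space M. bank r t x \<le> CB" using bank_le by blast
  have admY: "admissible M F T r W Y"
    unfolding admissible_def
  proof (intro conjI ballI)
    fix s assume s: "s \<in> {1..T}"
    have Xs: "X s \<in> borel_measurable (F s)" "Linfty M (F T) (X s)" using adm s unfolding admissible_def by auto
    have m1: "(\<lambda>x. if s = T then bank r s x * h x else 0) \<in> borel_measurable (F s)"
      by (cases "s = T") (use bank_meas hmT in auto)
    have m2: "(\<lambda>x. if s = t then bank r s x * h x else 0) \<in> borel_measurable (F s)"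
      by (cases "s = t") (use bank_meas hm tle in auto)
    show mY: "Y s \<in> borel_measurable (F s)" unfolding Y_def[abs_def] using Xs(1) m1 m2 by measurable
    have mYT: "Y s \<in> borel_measurable (F T)" using meas_mono[OF _ _ mY] s by auto
    obtain KX where KX: "AE x in M. \<bar>X s x\<bar> \<le> KX" using Xs(2) unfolding Linfty_def by blast
    have "AE x in M. \<bar>Y s x\<bar> \<le> KX + CB * K + CB * K" using KX Hb AE_space
    proof eventually_elim
      case (elim x)
      have b: "\<bar>bank r s x * h x\<bar> \<le> CB * K"
      proof -
        have "0 \<le> bank r s x" using bank_ge1[of s x] s elim by auto
        then have "\<bar>bank r s x * h x\<bar> = bank r s x * \<bar>h x\<bar>" by (simp add: abs_mult)
        also have "\<dots> \<le> CB * K" using CB s elim hle[of x] \<open>0 \<le> bank r s x\<close>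
          by (intro mult_mono) (auto intro: order_trans)
        finally show ?thesis .
      qed
      have "\<bar>Y s x\<bar> \<le> \<bar>X s x\<bar> + \<bar>if s = T then bank r s x * h x else 0\<bar> + \<bar>if s = t then bank r s x * h x else 0\<bar>"
        unfolding Y_def by linarith
      also have "\<dots> \<le> KX + CB * K + CB * K" using elim b
        by (intro add_mono) (auto simp del: abs_mult)
      finally show ?case .
    qed
    then show "Linfty M (F T) (Y s)" unfolding Linfty_def using mYT by blast
  next
    have aeX: "AE x in M. (\<Sum>s\<in>{1..T}. disc r X s x) = W x" using adm unfolding admissible_def by blast
    show "AE x in M. (\<Sum>s\<in>{1..T}. disc r Y s x) = W x"
      using aeX AE_space
    proof eventually_elim
      case (elim x)
      have "(\<Sum>s\<in>{1..T}. disc r Y s x) = (\<Sum>s\<in>{1..T}. disc r X s x + (if s = T then h x else 0) - (if s = t then h x else 0))"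
        using discY elim by (intro sum.cong) auto
      also have "\<dots> = (\<Sum>s\<in>{1..T}. disc r X s x) + h x - h x"
        using Tin t by (simp add: sum.distrib sum_subtractf)
      finally show ?case using elim by simp
    qed
  qed
  have EUo: "exp_util M r u Y s = exp_util M r u X s" if "s \<in> {1..T}" "s \<noteq> t" "s \<noteq> T" for s
    unfolding exp_util_def using discY that by (intro Bochner_Integration.integral_cong) auto
  have EUT: "exp_util M r u X T < exp_util M r u Y T"
  proof -
    have "exp_util M r u Y T = (\<integral>x. u T (disc r X T x + H x / real (Suc n)) \<partial>M)"
      unfolding exp_util_def using discY Tin tT by (intro Bochner_Integration.integral_cong) (auto simp: h_def)
    then show ?thesis using N2[of n] unfolding exp_util_def n_def by simp
  qed
  have EUt: "exp_util M r u X t < exp_util M r u Y t"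
  proof -
    have "exp_util M r u Y t = (\<integral>x. u t (disc r X t x + - H x / real (Suc n)) \<partial>M)"
      unfolding exp_util_def using discY t tT by (intro Bochner_Integration.integral_cong) (auto simp: h_def)
    then show ?thesis using N1[of n] unfolding exp_util_def n_def by simp
  qed
  have "\<forall>s\<in>{1..T}. exp_util M r u X s \<le> exp_util M r u Y s"
    using EUo EUT EUt by (metis order.refl less_imp_le)
  then show False using po admY EUT Tin unfolding pareto_optimal_def by blast
qed


lemma stepB:
  assumes po: "pareto_optimal M F T r u W X" and t: "t \<in> {1..T}"
    and Hm: "H \<in> borel_measurable (F t)" and Hb: "AE x in M. \<bar>H x\<bar> \<le> K"
  shows "(\<integral>x. ud T (disc r X T x) * H x \<partial>M) =
     (\<integral>x. ud T (disc r X T x) \<partial>M) / (\<integral>x. ud t (disc r X t x) \<partial>M) * (\<integral>x. ud t (disc r X t x) * H x \<partial>M)"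
proof -
  have adm: "admissible M F T r W X" using po unfolding pareto_optimal_def by blast
  have Tin: "T \<in> {1..T}" using T1 by auto
  have tle: "t \<le> T" using t by auto
  obtain K1 where K1: "AE x in M. \<bar>disc r X t x\<bar> \<le> K1" using disc_bdd[OF adm t] by blast
  obtain K2 where K2: "AE x in M. \<bar>disc r X T x\<bar> \<le> K2" using disc_bdd[OF adm Tin] by blast
  have Z1: "disc r X t \<in> borel_measurable M" using disc_meas[OF adm t] meas_M tle by blast
  have Z2: "disc r X T \<in> borel_measurable M" using disc_meas[OF adm Tin] meas_M by blast
  have one: "(\<lambda>x. 1::real) \<in> borel_measurable M" "AE x in M. \<bar>1::real\<bar> \<le> 1" by auto
  have it: "integrable M (\<lambda>x. ud t (disc r X t x))"
    using bdd_mult_int[OF ud(2)[OF t] Z1 K1 one] by simp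
  have iT: "integrable M (\<lambda>x. ud T (disc r X T x))"
    using bdd_mult_int[OF ud(2)[OF Tin] Z2 K2 one] by simp
  have Et: "0 < (\<integral>x. ud t (disc r X t x) \<partial>M)" using integral_pos[OF it] ud(3)[OF t] by blast
  have ET: "0 < (\<integral>x. ud T (disc r X T x) \<partial>M)" using integral_pos[OF iT] ud(3)[OF Tin] by blast
  define c where "c = (\<integral>x. ud T (disc r X T x) \<partial>M) / (\<integral>x. ud t (disc r X t x) \<partial>M)"
  have le: "(\<integral>x. ud T (disc r X T x) * G x \<partial>M) \<le> c * (\<integral>x. ud t (disc r X t x) * G x \<partial>M)"
    if Gm: "G \<in> borel_measurable (F t)" and Gb: "AE x in M. \<bar>G x\<bar> \<le> KG" for G KG
  proof -
    have GM: "G \<in> borel_measurable M" using Gm meas_M tle by blast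
    have itG: "integrable M (\<lambda>x. ud t (disc r X t x) * G x)" by (rule bdd_mult_int[OF ud(2)[OF t] Z1 K1 GM Gb])
    have iTG: "integrable M (\<lambda>x. ud T (disc r X T x) * G x)" by (rule bdd_mult_int[OF ud(2)[OF Tin] Z2 K2 GM Gb])
    define k where "k = (\<integral>x. ud t (disc r X t x) * G x \<partial>M) / (\<integral>x. ud t (disc r X t x) \<partial>M)"
    have "(\<integral>x. ud T (disc r X T x) * G x \<partial>M) \<le> k * (\<integral>x. ud T (disc r X T x) \<partial>M)"
    proof (rule field_le_epsilon)
      fix e :: real assume e: "0 < e"
      define d where "d = e / (\<integral>x. ud T (disc r X T x) \<partial>M)"
      have d: "0 < d" using e ET by (simp add: d_def)
      define G' where "G' x = G x - (k + d)" for x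
      have G'm: "G' \<in> borel_measurable (F t)" unfolding G'_def[abs_def] using Gm by measurable
      have G'b: "AE x in M. \<bar>G' x\<bar> \<le> KG + \<bar>k + d\<bar>" using Gb by eventually_elim (auto simp: G'_def)
      have "(\<integral>x. ud t (disc r X t x) * G' x \<partial>M) = (\<integral>x. ud t (disc r X t x) * G x \<partial>M) - (k + d) * (\<integral>x. ud t (disc r X t x) \<partial>M)"
        unfolding G'_def by (rule integral_aff[OF it itG])
      also have "\<dots> = - d * (\<integral>x. ud t (disc r X t x) \<partial>M)" using Et by (simp add: k_def field_simps)
      also have "\<dots> < 0" using d Et by (simp add: mult_pos_pos)
      finally have "(\<integral>x. ud T (disc r X T x) * G' x \<partial>M) \<le> 0"
        by (rule stepA[OF po t G'm G'b])
      moreover have "(\<integral>x. ud T (disc r X T x) * G' x \<partial>M) = (\<integral>x. ud T (disc r X T x) * G x \<partial>M) - (k + d) * (\<integral>x. ud T (disc r X T x) \<partial>M)"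
        unfolding G'_def by (rule integral_aff[OF iT iTG])
      moreover have "d * (\<integral>x. ud T (disc r X T x) \<partial>M) = e" using ET by (simp add: d_def)
      ultimately show "(\<integral>x. ud T (disc r X T x) * G x \<partial>M) \<le> k * (\<integral>x. ud T (disc r X T x) \<partial>M) + e"
        by (simp add: algebra_simps)
    qed
    also have "k * (\<integral>x. ud T (disc r X T x) \<partial>M) = c * (\<integral>x. ud t (disc r X t x) * G x \<partial>M)"
      unfolding k_def c_def by simp
    finally show ?thesis .
  qed
  have m: "(\<lambda>x. - H x) \<in> borel_measurable (F t)" using Hm by measurable
  have "(\<integral>x. ud T (disc r X T x) * - H x \<partial>M) \<le> c * (\<integral>x. ud t (disc r X t x) * - H x \<partial>M)"
    by (rule le[OF m]) (use Hb in simp)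
  then have "c * (\<integral>x. ud t (disc r X t x) * H x \<partial>M) \<le> (\<integral>x. ud T (disc r X T x) * H x \<partial>M)" by simp
  with le[OF Hm Hb] show ?thesis unfolding c_def by linarith
qed


end

context setting begin
lemma stepC:
  assumes po: "pareto_optimal M F T r u W X"
  defines "lam \<equiv> \<lambda>s. (\<integral>x. ud T (disc r X T x) \<partial>M) / (\<integral>x. ud s (disc r X s x) \<partial>M)"
  shows "(\<forall>t\<in>{1..T}. 0 < lam t) \<and> solves_P M F T r u W lam X"
proof -
  have adm: "admissible M F T r W X" using po unfolding pareto_optimal_def by blast
  have Tin: "T \<in> {1..T}" using T1 by auto
  have one: "(\<lambda>x. 1::real) \<in> borel_measurable M" "AE x in M. \<bar>1::real\<bar> \<le> 1" by auto
  have Zm: "disc r Y s \<in> borel_measurable M" if "admissible M F T r W Y" "s \<in> {1..T}" for Y s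
    using disc_meas[OF that] meas_M that(2) by auto
  have ipos: "0 < (\<integral>x. ud s (disc r X s x) \<partial>M)" if s: "s \<in> {1..T}" for s
  proof -
    obtain K1 where K1: "AE x in M. \<bar>disc r X s x\<bar> \<le> K1" using disc_bdd[OF adm s] by blast
    have "integrable M (\<lambda>x. ud s (disc r X s x))"
      using bdd_mult_int[OF ud(2)[OF s] Zm[OF adm s] K1 one] by simp
    then show ?thesis using integral_pos ud(3)[OF s] by blast
  qed
  have lpos: "\<forall>t\<in>{1..T}. 0 < lam t" unfolding lam_def using ipos Tin by (auto intro: divide_pos_pos)
  obtain KT where KT: "AE x in M. \<bar>disc r X T x\<bar> \<le> KT" using disc_bdd[OF adm Tin] by blast
  have opt: "(\<Sum>t\<in>{1..T}. lam t * exp_util M r u Y t) \<le> (\<Sum>t\<in>{1..T}. lam t * exp_util M r u X t)"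
    if admY: "admissible M F T r W Y" for Y
  proof -
    define D where "D s x = disc r Y s x - disc r X s x" for s x
    have Dm: "D s \<in> borel_measurable (F s)" if "s \<in> {1..T}" for s
      unfolding D_def[abs_def] using disc_meas[OF admY that] disc_meas[OF adm that] by measurable
    have DM: "D s \<in> borel_measurable M" if "s \<in> {1..T}" for s
      using Dm[OF that] meas_M that by auto
    have Db: "\<exists>K. AE x in M. \<bar>D s x\<bar> \<le> K" if s: "s \<in> {1..T}" for s
    proof -
      obtain K1 where K1: "AE x in M. \<bar>disc r Y s x\<bar> \<le> K1" using disc_bdd[OF admY s] by blast
      obtain K2 where K2: "AE x in M. \<bar>disc r X s x\<bar> \<le> K2" using disc_bdd[OF adm s] by blast
      have "AE x in M. \<bar>D s x\<bar> \<le> K1 + K2" using K1 K2 by eventually_elim (auto simp: D_def)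
      then show ?thesis by blast
    qed
    have step: "lam s * (exp_util M r u Y s - exp_util M r u X s) \<le> (\<integral>x. ud T (disc r X T x) * D s x \<partial>M)"
      if s: "s \<in> {1..T}" for s
    proof -
      obtain K where K: "AE x in M. \<bar>D s x\<bar> \<le> K" using Db[OF s] by blast
      obtain K1 where K1: "AE x in M. \<bar>disc r Y s x\<bar> \<le> K1" using disc_bdd[OF admY s] by blast
      obtain K2 where K2: "AE x in M. \<bar>disc r X s x\<bar> \<le> K2" using disc_bdd[OF adm s] by blast
      have cu: "continuous_on UNIV (u s)" using deriv_cont ud(1)[OF s] by blast
      have iY: "integrable M (\<lambda>x. u s (disc r Y s x))" using cont_comp_bdd(3)[OF cu Zm[OF admY s] K1] .
      have iX: "integrable M (\<lambda>x. u s (disc r X s x))" using cont_comp_bdd(3)[OF cu Zm[OF adm s] K2] .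
      have iD: "integrable M (\<lambda>x. ud s (disc r X s x) * D s x)"
        by (rule bdd_mult_int[OF ud(2)[OF s] Zm[OF adm s] K2 DM[OF s] K])
      have "exp_util M r u Y s - exp_util M r u X s = (\<integral>x. u s (disc r Y s x) - u s (disc r X s x) \<partial>M)"
        unfolding exp_util_def using iY iX by simp
      also have "\<dots> \<le> (\<integral>x. ud s (disc r X s x) * D s x \<partial>M)"
      proof (rule integral_mono)
        fix x
        show "u s (disc r Y s x) - u s (disc r X s x) \<le> ud s (disc r X s x) * D s x"
          using utility_tangent'[OF utl[OF s] ud(1)[OF s], of "disc r Y s x" "disc r X s x"]
          unfolding D_def by simp
      qed (use iY iX iD in auto)
      finally have "lam s * (exp_util M r u Y s - exp_util M r u X s) \<le> lam s * (\<integral>x. ud s (disc r X s x) * D s x \<partial>M)"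
        using lpos s by (intro mult_left_mono) (auto intro: less_imp_le)
      also have "\<dots> = (\<integral>x. ud T (disc r X T x) * D s x \<partial>M)"
        unfolding lam_def using stepB[OF po s Dm[OF s] K] by simp
      finally show ?thesis .
    qed
    have iTD: "integrable M (\<lambda>x. ud T (disc r X T x) * D s x)" if s: "s \<in> {1..T}" for s
    proof -
      obtain K where K: "AE x in M. \<bar>D s x\<bar> \<le> K" using Db[OF s] by blast
      show ?thesis by (rule bdd_mult_int[OF ud(2)[OF Tin] Zm[OF adm Tin] KT DM[OF s] K])
    qed
    have "(\<Sum>s\<in>{1..T}. lam s * exp_util M r u Y s) - (\<Sum>s\<in>{1..T}. lam s * exp_util M r u X s)
        = (\<Sum>s\<in>{1..T}. lam s * (exp_util M r u Y s - exp_util M r u X s))"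
      by (simp add: sum_subtractf right_diff_distrib)
    also have "\<dots> \<le> (\<Sum>s\<in>{1..T}. (\<integral>x. ud T (disc r X T x) * D s x \<partial>M))"
      by (intro sum_mono step) auto
    also have "\<dots> = (\<integral>x. (\<Sum>s\<in>{1..T}. ud T (disc r X T x) * D s x) \<partial>M)"
      using iTD by (intro Bochner_Integration.integral_sum[symmetric]) auto
    also have "\<dots> = (\<integral>x. 0 \<partial>M)"
    proof (rule integral_cong_AE)
      show "(\<lambda>x. \<Sum>s\<in>{1..T}. ud T (disc r X T x) * D s x) \<in> borel_measurable M"
        using iTD by (intro borel_measurable_sum) auto
      have aeX: "AE x in M. (\<Sum>s\<in>{1..T}. disc r X s x) = W x" using adm unfolding admissible_def by blast
      have aeY: "AE x in M. (\<Sum>s\<in>{1..T}. disc r Y s x) = W x" using admY unfolding admissible_def by blast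
      show "AE x in M. (\<Sum>s\<in>{1..T}. ud T (disc r X T x) * D s x) = 0" using aeX aeY
      proof eventually_elim
        case (elim x)
        have "(\<Sum>s\<in>{1..T}. ud T (disc r X T x) * D s x) = ud T (disc r X T x) * (\<Sum>s\<in>{1..T}. D s x)"
          by (simp add: sum_distrib_left)
        also have "(\<Sum>s\<in>{1..T}. D s x) = 0" using elim by (simp add: D_def sum_subtractf)
        finally show ?case by simp
      qed
    qed simp
    finally show ?thesis by simp
  qed
  show ?thesis using lpos opt adm unfolding solves_P_def by blast
qed

lemma converse:
  assumes "\<forall>t\<in>{1..T}. 0 < lam t" "solves_P M F T r u W lam X"
  shows "pareto_optimal M F T r u W X"
proof -
  have adm: "admissible M F T r W X" using assms unfolding solves_P_def by blast
  show ?thesis unfolding pareto_optimal_def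
  proof (intro conjI adm notI, elim exE conjE)
    fix Y assume admY: "admissible M F T r W Y"
      and le: "\<forall>t\<in>{1..T}. exp_util M r u X t \<le> exp_util M r u Y t"
      and ex: "\<exists>t0\<in>{1..T}. exp_util M r u X t0 < exp_util M r u Y t0"
    have "(\<Sum>t\<in>{1..T}. lam t * exp_util M r u X t) < (\<Sum>t\<in>{1..T}. lam t * exp_util M r u Y t)"
    proof (rule sum_strict_mono_ex1)
      show "\<forall>t\<in>{1..T}. lam t * exp_util M r u X t \<le> lam t * exp_util M r u Y t"
        using le assms(1) by (simp add: less_imp_le mult_left_mono)
      show "\<exists>t\<in>{1..T}. lam t * exp_util M r u X t < lam t * exp_util M r u Y t"
        using ex assms(1) by (meson mult_strict_left_mono)
    qed simp
    moreover have "(\<Sum>t\<in>{1..T}. lam t * exp_util M r u Y t) \<le> (\<Sum>t\<in>{1..T}. lam t * exp_util M r u X t)"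
      using assms(2) admY unfolding solves_P_def by blast
    ultimately show False by simp
  qed
qed

end

theorem theorem2p13:
  fixes M :: "'a measure" and F :: "nat \<Rightarrow> 'a measure" and T :: nat
    and r :: "nat \<Rightarrow> 'a \<Rightarrow> real" and u :: "nat \<Rightarrow> real \<Rightarrow> real"
    and W :: "'a \<Rightarrow> real" and X :: "nat \<Rightarrow> 'a \<Rightarrow> real"
  assumes "prob_space M"
    and "1 \<le> T"
    and "finite_filtration M F T"
    and "rate_process M F T r"
    and "\<forall>t\<in>{1..T}. utility (u t)"
    and "Linfty M (F T) W"
    and "admissible M F T r W X"
  shows "pareto_optimal M F T r u W X \<longleftrightarrow>
         (\<exists>lam :: nat \<Rightarrow> real. (\<forall>t\<in>{1..T}. 0 < lam t) \<and> solves_P M F T r u W lam X)"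
proof -
  have S: "setting M F T r u" by (rule setting.intro[OF assms(1) setting_axioms.intro[OF assms(2-5)]])
  show ?thesis
  proof
    assume "pareto_optimal M F T r u W X"
    from setting.stepC[OF S this] show "\<exists>lam. (\<forall>t\<in>{1..T}. 0 < lam t) \<and> solves_P M F T r u W lam X"
      by (rule exI[where x="\<lambda>s. (\<integral>x. setting.ud u T (disc r X T x) \<partial>M) / (\<integral>x. setting.ud u s (disc r X s x) \<partial>M)"])
  next
    assume "\<exists>lam. (\<forall>t\<in>{1..T}. 0 < lam t) \<and> solves_P M F T r u W lam X"
    then obtain lam where "\<forall>t\<in>{1..T}. 0 < lam t" "solves_P M F T r u W lam X" by blast
    then show "pareto_optimal M F T r u W X" by (rule setting.converse[OF S])
  qed
qed

end
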